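(* Let $D$ be a flagging monitor over an event alphabet $\Sigma$. For every infinite trace $\sigma \in \Sigma^\omega$, all indices $i \le j$ and every natural number $n > 0$: if $\sigma_{i,j} \Vdash D$ then $\sigma_{i,j+n} \not\Vdash D$.
   Context: Traces: for an infinite trace $\sigma=\sigma_0\sigma_1\cdots$ over $\Sigma$ and $i\le j$, $\sigma_{i,j}=\sigma_i\cdots\sigma_j$ is the finite sub-trace from position $i$ to position $j$ inclusive. A flagging monitor is a tuple $D=\langle \Sigma, \mathbb{V}, \Theta, Q, \theta_0, q_0, F, \perp, \rightarrow\rangle$ where $\Sigma$ is the event alphabet, $\mathbb{V}$ is a set of typed variables (with arbitrary, possibly infinite, domains), $\Theta$ is the set of valuations of $\mathbb{V}$, $Q$ is a finite set of states, $\theta_0\in\Theta$ is the initial valuation, $q_0\in Q$ the initial state, $F\subseteq Q\setminus\{q_0\}$ the set of flagging states, $\perp\in Q$ a sink state, and $\rightarrow$ is a deterministic set of transitions $q \xrightarrow{g\mapsto a} q'$ with $q\in Q\setminus\{\perp\}$, guard $g:\Sigma\times\Theta\to\{\mathit{true},\mathit{false}\}$ and action $a:\Sigma\times\Theta\to\Theta$ (determinism: for each $q$, $E$, $\theta$, at most one transition leaving $q$ has a guard true on $(E,\theta)$). Semantics: configurations are pairs $(q,\theta)\in Q\times\Theta$; on reading an event $E\in\Sigma$: (1) if $q\notin F\cup\{\perp\}$ and there is a transition $q\xrightarrow{g\mapsto a}q'$ with $g(E,\theta)$ true, move to $(q',a(E,\theta))$; (2) if $q\notin F\cup\{\perp\}$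 and no transition from $q$ has a guard true on $(E,\theta)$, stay in $(q,\theta)$; (3) $(\perp,\theta)$ moves to $(\perp,\theta)$; (4) if $q\in F$, $(q,\theta)$ moves to $(\perp,\theta)$. A finite trace $\sigma_{i,j}$ is flagging, written $\sigma_{i,j}\Vdash D$, if running the monitor from $(q_0,\theta_0)$ on $\sigma_i,\dots,\sigma_j$ ends in a configuration $(q_F,\theta')$ with $q_F\in F$. *)

theory Defs
  imports Main
begin

text \<open>The event alphabet Sigma is the type 'e, the set Theta of
valuations of the typed variables is the type 'v, states are of type 'q with the finite
state set Q given explicitly.\<close>

record ('e, 'v, 'q) flagging_monitor =
  states :: "'q set"
  theta0 :: 'v
  q0 :: 'q
  flag :: "'q set"
  sink :: 'q
  trans :: "('q \<times> ('e \<Rightarrow> 'v \<Rightarrow> bool) \<times> ('e \<Rightarrow> 'v \<Rightarrow> 'v) \<times> 'q) set"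

definition wf_monitor :: "('e, 'v, 'q) flagging_monitor \<Rightarrow> bool" where
  "wf_monitor D \<longleftrightarrow>
     finite (states D) \<and>
     q0 D \<in> states D \<and>
     flag D \<subseteq> states D - {q0 D} \<and>
     sink D \<in> states D \<and>
     sink D \<notin> flag D \<and>
     (\<forall>(q, g, a, q') \<in> trans D. q \<in> states D - {sink D} \<and> q' \<in> states D) \<and>
     (\<forall>q E \<theta> t1 t2. t1 \<in> trans D \<longrightarrow> t2 \<in> trans D \<longrightarrow>
        fst t1 = q \<longrightarrow> fst t2 = q \<longrightarrow>
        fst (snd t1) E \<theta> \<longrightarrow> fst (snd t2) E \<theta> \<longrightarrow> t1 = t2)"

definition step :: "('e, 'v, 'q) flagging_monitor \<Rightarrow> 'q \<times> 'v \<Rightarrow> 'e \<Rightarrow> 'q \<times> 'v" where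
  "step D c E = (let (q, \<theta>) = c in
     if q = sink D then (sink D, \<theta>)
     else if q \<in> flag D then (sink D, \<theta>)
     else if (\<exists>g a q'. (q, g, a, q') \<in> trans D \<and> g E \<theta>)
       then (let (g, a, q') = (THE t. (q, t) \<in> trans D \<and> fst t E \<theta>) in (q', a E \<theta>))
     else (q, \<theta>))"

definition run :: "('e, 'v, 'q) flagging_monitor \<Rightarrow> 'e list \<Rightarrow> 'q \<times> 'v" where
  "run D es = foldl (step D) (q0 D, theta0 D) es"

definition flagging :: "(nat \<Rightarrow> 'e) \<Rightarrow> nat \<Rightarrow> nat \<Rightarrow> ('e, 'v, 'q) flagging_monitor \<Rightarrow> bool" where
  "flagging \<sigma> i j D \<longleftrightarrow> fst (run D (map \<sigma> [i..<Suc j])) \<in> flag D"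

end

theory Submission
  imports Defs
begin

lemma sink_stays: "fst c = sink D \<Longrightarrow> fst (foldl (step D) c es) = sink D"
proof (induction es arbitrary: c)
  case Nil then show ?case by simp
next
  case (Cons e es)
  have "fst (step D c e) = sink D" using Cons.prems
    by (cases c) (simp add: step_def)
  then show ?case using Cons.IH by simp
qed

lemma flag_to_sink: "fst c \<in> flag D \<Longrightarrow> fst (step D c e) = sink D"
  by (cases c) (simp add: step_def)

theorem proposition1:
  fixes D :: "('e, 'v, 'q) flagging_monitor" and \<sigma> :: "nat \<Rightarrow> 'e"
    and i j n :: nat
  assumes "wf_monitor D"
    and "i \<le> j"
    and "n > 0"
    and "flagging \<sigma> i j D"
  shows "\<not> flagging \<sigma> i (j + n) D"
proof -
  have sf: "sink D \<notin> flag D" using assms(1) by (simp add: wf_monitor_def)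
  have split: "[i..<Suc (j+n)] = [i..<Suc j] @ Suc j # [Suc (Suc j)..<Suc (j+n)]"
    using assms(2,3)
  proof -
    have "[i..<Suc (j+n)] = [i..<Suc j] @ [Suc j..<Suc (j+n)]"
      using assms(2) upt_add_eq_append[of i "Suc j" n] by simp
    moreover have "[Suc j..<Suc (j+n)] = Suc j # [Suc (Suc j)..<Suc (j+n)]"
      using assms(3) upt_conv_Cons by simp
    ultimately show ?thesis by simp
  qed
  let ?c = "run D (map \<sigma> [i..<Suc j])"
  have c: "fst ?c \<in> flag D" using assms(4) by (simp add: flagging_def)
  have "run D (map \<sigma> [i..<Suc (j+n)])
      = foldl (step D) (step D ?c (\<sigma> (Suc j))) (map \<sigma> [Suc (Suc j)..<Suc (j+n)])"
    unfolding split run_def by simp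
  moreover have "fst (step D ?c (\<sigma> (Suc j))) = sink D" using flag_to_sink[OF c] .
  ultimately have "fst (run D (map \<sigma> [i..<Suc (j+n)])) = sink D" using sink_stays by metis
  then show ?thesis using sf by (simp add: flagging_def)
qed

end
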